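(* Let $G$ be a $2$-connected graph not containing $K_{2,3}$ as a minor, and let $K_0$ be a connected subgraph of $G$. Then $|N(K_1)|=2$ for every component $K_1$ of $G-(K_0\cup N(K_0))$.
   Context: Graphs are simple. For a subgraph $H$ of $G$, $N(H)$ denotes the set of vertices of $G$ not in $H$ that have a neighbour in $H$; $G-(K_0\cup N(K_0))$ is obtained by deleting the vertices of $K_0$ and of $N(K_0)$. *)

theory Defs
  imports Main
begin

definition sgraph :: "'a set \<Rightarrow> ('a \<Rightarrow> 'a \<Rightarrow> bool) \<Rightarrow> bool" where
  "sgraph V E \<longleftrightarrow> finite V \<and> (\<forall>x y. E x y \<longrightarrow> x \<in> V \<and> y \<in> V)
     \<and> (\<forall>x y. E x y \<longrightarrow> E y x) \<and> (\<forall>x. \<not> E x x)"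

definition connected_set :: "'a set \<Rightarrow> ('a \<Rightarrow> 'a \<Rightarrow> bool) \<Rightarrow> 'a set \<Rightarrow> bool" where
  "connected_set V E S \<longleftrightarrow> S \<subseteq> V \<and> S \<noteq> {} \<and>
     (\<forall>u\<in>S. \<forall>v\<in>S. (\<lambda>x y. x \<in> S \<and> y \<in> S \<and> E x y)\<^sup>*\<^sup>* u v)"

definition two_connected :: "'a set \<Rightarrow> ('a \<Rightarrow> 'a \<Rightarrow> bool) \<Rightarrow> bool" where
  "two_connected V E \<longleftrightarrow> card V \<ge> 3 \<and> connected_set V E V \<and>
     (\<forall>v\<in>V. connected_set V E (V - {v}))"

definition nbhd :: "'a set \<Rightarrow> ('a \<Rightarrow> 'a \<Rightarrow> bool) \<Rightarrow> 'a set \<Rightarrow> 'a set" where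
  "nbhd V E S = {v \<in> V - S. \<exists>u\<in>S. E u v}"

definition component_of :: "'a set \<Rightarrow> ('a \<Rightarrow> 'a \<Rightarrow> bool) \<Rightarrow> 'a set \<Rightarrow> 'a set \<Rightarrow> bool" where
  "component_of V E R C \<longleftrightarrow> C \<subseteq> R \<and> connected_set V E C \<and>
     (\<forall>D. C \<subseteq> D \<and> D \<subseteq> R \<and> connected_set V E D \<longrightarrow> D = C)"

definition has_minor :: "'a set \<Rightarrow> ('a \<Rightarrow> 'a \<Rightarrow> bool) \<Rightarrow> 'b set \<Rightarrow> ('b \<Rightarrow> 'b \<Rightarrow> bool) \<Rightarrow> bool" where
  "has_minor V E W F \<longleftrightarrow> (\<exists>\<phi> :: 'b \<Rightarrow> 'a set.
     (\<forall>w\<in>W. connected_set V E (\<phi> w)) \<and>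
     (\<forall>w\<in>W. \<forall>w'\<in>W. w \<noteq> w' \<longrightarrow> \<phi> w \<inter> \<phi> w' = {}) \<and>
     (\<forall>w\<in>W. \<forall>w'\<in>W. F w w' \<longrightarrow> (\<exists>x\<in>\<phi> w. \<exists>y\<in>\<phi> w'. E x y)))"

definition K23_V :: "nat set" where "K23_V = {0..<5}"
definition K23_E :: "nat \<Rightarrow> nat \<Rightarrow> bool" where
  "K23_E i j \<longleftrightarrow> (i < 2 \<and> 2 \<le> j \<and> j < 5) \<or> (j < 2 \<and> 2 \<le> i \<and> i < 5)"

end

theory Submission
  imports Defs
begin

lemma conn_insert:
  assumes "connected_set V E S" "x \<in> S" "E x v" "v \<in> V" "sgraph V E"
  shows "connected_set V E (insert v S)"
proof -
  let ?R = "\<lambda>x y. x \<in> S \<and> y \<in> S \<and> E x y"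
  let ?Q = "\<lambda>x y. x \<in> insert v S \<and> y \<in> insert v S \<and> E x y"
  have mono: "?Q\<^sup>*\<^sup>* a b" if "?R\<^sup>*\<^sup>* a b" for a b
    using that
  proof (induction rule: rtranclp_induct)
    case base then show ?case by simp
  next
    case (step y z)
    have "?Q y z" using step(2) by simp
    with step(3) show ?case by (rule rtranclp.rtrancl_into_rtrancl)
  qed
  have ev: "E v x" using assms(3,5) unfolding sgraph_def by blast
  have xv: "?Q\<^sup>*\<^sup>* x v" using assms(2,3) by (intro r_into_rtranclp) simp
  have vx: "?Q\<^sup>*\<^sup>* v x" using assms(2) ev by (intro r_into_rtranclp) simp
  have SS: "?Q\<^sup>*\<^sup>* u w" if "u \<in> S" "w \<in> S" for u w
  proof -
    have "?R\<^sup>*\<^sup>* u w" using assms(1) that unfolding connected_set_def by blast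
    then show ?thesis by (rule mono)
  qed
  show ?thesis unfolding connected_set_def
  proof (intro conjI ballI)
    show "insert v S \<subseteq> V" using assms(1,4) unfolding connected_set_def by blast
    show "insert v S \<noteq> {}" by blast
    fix u w assume u: "u \<in> insert v S" and w: "w \<in> insert v S"
    show "?Q\<^sup>*\<^sup>* u w"
    proof (cases "u = v")
      case True
      show ?thesis
      proof (cases "w = v")
        case True then show ?thesis using \<open>u = v\<close> by simp
      next
        case False then have "w \<in> S" using w by blast
        then have "?Q\<^sup>*\<^sup>* x w" using SS assms(2) by blast
        with vx have "?Q\<^sup>*\<^sup>* v w" by (rule rtranclp_trans)
        then show ?thesis using True by simp
      qed
    next
      case False then have uS: "u \<in> S" using u by blast
      show ?thesis
      proof (cases "w = v")
        case True
        have "?Q\<^sup>*\<^sup>* u x" using SS assms(2) uS by blast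
        from this xv have "?Q\<^sup>*\<^sup>* u v" by (rule rtranclp_trans)
        then show ?thesis using True by simp
      next
        case False then have "w \<in> S" using w by blast
        then show ?thesis using SS uS by blast
      qed
    qed
  qed
qed

lemma path_stays:
  assumes "(\<lambda>x y. x \<in> T \<and> y \<in> T \<and> E x y)\<^sup>*\<^sup>* u z" "u \<in> K1"
    "nbhd V E K1 \<inter> T = {}" "T \<subseteq> V"
  shows "z \<in> K1"
  using assms(1,2)
proof (induction rule: rtranclp_induct)
  case base then show ?case by simp
next
  case (step y z)
  show ?case
  proof (rule ccontr)
    assume "z \<notin> K1"
    then have "z \<in> nbhd V E K1" using step assms(4) unfolding nbhd_def by blast
    then show False using step assms(3) by blast
  qed
qed

lemma three_elems:
  assumes "finite S" "3 \<le> card S"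
  shows "\<exists>a b c. a \<in> S \<and> b \<in> S \<and> c \<in> S \<and> a \<noteq> b \<and> a \<noteq> c \<and> b \<noteq> c"
proof -
  have "S \<noteq> {}" using assms by (intro notI) simp
  then obtain a where a: "a \<in> S" by blast
  have "2 \<le> card (S - {a})" using assms a by simp
  then have "S - {a} \<noteq> {}" by (intro notI) simp
  then obtain b where b: "b \<in> S - {a}" by blast
  have "1 \<le> card (S - {a} - {b})" using assms a b
    by (simp add: card_Diff_singleton)
  then have "S - {a} - {b} \<noteq> {}" by (intro notI) simp
  then obtain c where c: "c \<in> S - {a} - {b}" by blast
  show ?thesis using a b c by blast
qed

theorem lemma4p2:
  fixes V :: "'a set" and E :: "'a \<Rightarrow> 'a \<Rightarrow> bool" and K0 K1 :: "'a set"
  assumes "sgraph V E"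
    and "two_connected V E"
    and "\<not> has_minor V E K23_V K23_E"
    and "connected_set V E K0"
    and "component_of V E (V - (K0 \<union> nbhd V E K0)) K1"
  shows "card (nbhd V E K1) = 2"
proof -
  let ?R = "V - (K0 \<union> nbhd V E K0)"
  have sym: "\<And>x y. E x y \<Longrightarrow> E y x" using assms(1) unfolding sgraph_def by blast
  have EV: "\<And>x y. E x y \<Longrightarrow> x \<in> V \<and> y \<in> V" using assms(1) unfolding sgraph_def by blast
  have finV: "finite V" using assms(1) unfolding sgraph_def by blast
  have K1R: "K1 \<subseteq> ?R" and K1c: "connected_set V E K1"
    and K1max: "\<And>D. K1 \<subseteq> D \<Longrightarrow> D \<subseteq> ?R \<Longrightarrow> connected_set V E D \<Longrightarrow> D = K1"
    using assms(5) unfolding component_of_def by blast+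
  have K0ne: "K0 \<noteq> {}" and K0V: "K0 \<subseteq> V" using assms(4) unfolding connected_set_def by blast+
  have K1ne: "K1 \<noteq> {}" using K1c unfolding connected_set_def by blast
  have disj: "K0 \<inter> K1 = {}" using K1R by blast
  have sub: "nbhd V E K1 \<subseteq> nbhd V E K0"
  proof
    fix v assume v: "v \<in> nbhd V E K1"
    then obtain u where u: "u \<in> K1" "E u v" "v \<in> V" "v \<notin> K1" unfolding nbhd_def by blast
    have "v \<notin> K0"
    proof
      assume "v \<in> K0"
      then have "u \<in> nbhd V E K0" using u sym K1R unfolding nbhd_def by blast
      then show False using u K1R by blast
    qed
    moreover have "v \<in> nbhd V E K0"
    proof (rule ccontr)
      assume "v \<notin> nbhd V E K0"
      then have "insert v K1 \<subseteq> ?R" using K1R u \<open>v \<notin> K0\<close> by blast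
      moreover have "connected_set V E (insert v K1)"
        using conn_insert[OF K1c u(1,2,3) assms(1)] .
      ultimately have "insert v K1 = K1" using K1max by blast
      then show False using u by blast
    qed
    ultimately show "v \<in> nbhd V E K0" by blast
  qed
  have finN: "finite (nbhd V E K1)" using finV unfolding nbhd_def by auto
  have ge2: "card (nbhd V E K1) \<ge> 2"
  proof (rule ccontr)
    assume "\<not> ?thesis"
    then have "card (nbhd V E K1) = 0 \<or> card (nbhd V E K1) = 1" by linarith
    then obtain T where T: "connected_set V E T" "nbhd V E K1 \<inter> T = {}" "K0 \<subseteq> T" "K1 \<subseteq> T"
    proof
      assume "card (nbhd V E K1) = 0"
      then have "nbhd V E K1 = {}" using finN by simp
      moreover have "connected_set V E V" using assms(2) unfolding two_connected_def by blast
      ultimately show ?thesis using that K0V K1R by blast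
    next
      assume "card (nbhd V E K1) = 1"
      then obtain w where w: "nbhd V E K1 = {w}" using card_1_singletonE by blast
      then have wV: "w \<in> V" unfolding nbhd_def by blast
      have "connected_set V E (V - {w})" using assms(2) wV unfolding two_connected_def by blast
      moreover have "w \<notin> K0" using w sub unfolding nbhd_def by blast
      moreover have "w \<notin> K1" using w unfolding nbhd_def by blast
      ultimately show ?thesis using that K0V K1R w by blast
    qed
    obtain u x where u: "u \<in> K1" and x: "x \<in> K0" using K0ne K1ne by blast
    have TV: "T \<subseteq> V" using T(1) unfolding connected_set_def by blast
    have "(\<lambda>x y. x \<in> T \<and> y \<in> T \<and> E x y)\<^sup>*\<^sup>* u x"
      using T u x unfolding connected_set_def by blast
    then have "x \<in> K1" using path_stays[OF _ u T(2) TV] by blast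
    then show False using x disj by blast
  qed
  have le2: "card (nbhd V E K1) \<le> 2"
  proof (rule ccontr)
    assume "\<not> ?thesis"
    then have "3 \<le> card (nbhd V E K1)" by simp
    then obtain a b c where abc: "a \<in> nbhd V E K1" "b \<in> nbhd V E K1" "c \<in> nbhd V E K1"
      "a \<noteq> b" "a \<noteq> c" "b \<noteq> c"
      using three_elems[OF finN] by blast
    define \<phi> where "\<phi> = (\<lambda>i::nat. if i = 0 then K0 else if i = 1 then K1 else
       if i = 2 then {a} else if i = 3 then {b} else {c})"
    have sing: "\<And>z. z \<in> V \<Longrightarrow> connected_set V E {z}" unfolding connected_set_def by auto
    have aV: "a \<in> V" "b \<in> V" "c \<in> V" using abc unfolding nbhd_def by auto
    have n0: "a \<in> nbhd V E K0" "b \<in> nbhd V E K0" "c \<in> nbhd V E K0" using abc sub by auto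
    have out: "a \<notin> K0" "b \<notin> K0" "c \<notin> K0" "a \<notin> K1" "b \<notin> K1" "c \<notin> K1"
      using n0 abc unfolding nbhd_def by auto
    obtain a0 b0 c0 where e0: "a0 \<in> K0" "E a0 a" "b0 \<in> K0" "E b0 b" "c0 \<in> K0" "E c0 c"
      using n0 unfolding nbhd_def by blast
    obtain a1 b1 c1 where e1: "a1 \<in> K1" "E a1 a" "b1 \<in> K1" "E b1 b" "c1 \<in> K1" "E c1 c"
      using abc unfolding nbhd_def by blast
    have "has_minor V E K23_V K23_E"
      unfolding has_minor_def
    proof (intro exI[of _ \<phi>] conjI ballI impI)
      fix w assume "w \<in> K23_V"
      then have "w = 0 \<or> w = 1 \<or> w = 2 \<or> w = 3 \<or> w = 4" by (auto simp: K23_V_def)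
      then show "connected_set V E (\<phi> w)"
        by (elim disjE) (simp_all add: \<phi>_def assms(4) K1c sing aV)
    next
      fix w w' assume "w \<in> K23_V" "w' \<in> K23_V" and ne: "w \<noteq> w'"
      then have "w = 0 \<or> w = 1 \<or> w = 2 \<or> w = 3 \<or> w = 4"
        "w' = 0 \<or> w' = 1 \<or> w' = 2 \<or> w' = 3 \<or> w' = 4" by (auto simp: K23_V_def)
      then show "\<phi> w \<inter> \<phi> w' = {}" using ne
        by (elim disjE) (simp_all add: \<phi>_def disj Int_commute out abc(4,5,6) abc(4,5,6)[symmetric])
    next
      fix w w' assume "w \<in> K23_V" "w' \<in> K23_V" and ed: "K23_E w w'"
      then have "w = 0 \<or> w = 1 \<or> w = 2 \<or> w = 3 \<or> w = 4"
        "w' = 0 \<or> w' = 1 \<or> w' = 2 \<or> w' = 3 \<or> w' = 4" by (auto simp: K23_V_def)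
      then show "\<exists>x\<in>\<phi> w. \<exists>y\<in>\<phi> w'. E x y" using ed
        by (elim disjE) (simp_all add: \<phi>_def K23_E_def; metis e0 e1 sym)+
    qed
    then show False using assms(3) by blast
  qed
  show ?thesis using ge2 le2 by simp
qed

end
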